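(* Let $|\psi\rangle$ be a state in a tensor-product Hilbert space $\mathcal H=\bigotimes_v\mathcal H_v$ of finite-dimensional factors. Let $U=\prod_vU_v$ be an on-site unitary, with each $U_v$ a unitary on $\mathcal H_v$. Let $A_1,\dots,A_n$ be regions and $t_1,\dots,t_n\in\mathbb R$. Then $U$ can be moved to any position in the sequence of instantaneous modular flows: for every $i\in\{1,\dots,n+1\}$, $$U\,\mathcal I_{A_n}(t_n)\cdots\mathcal I_{A_1}(t_1)|\psi\rangle=\mathcal I_{A_n}(t_n)\cdots\mathcal I_{A_i}(t_i)\,U\,\mathcal I_{A_{i-1}}(t_{i-1})\cdots\mathcal I_{A_1}(t_1)|\psi\rangle.$$ In particular, $U\,\mathcal I_{A_n}(t_n)\cdots\mathcal I_{A_1}(t_1)|\psi\rangle=\mathcal I_{A_n}(t_n)\cdots\mathcal I_{A_1}(t_1)\,U|\psi\rangle$.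
   Context: A region $X$ is a set of sites, and $\overline X$ is its complement. For a state $|\phi\rangle$, $\rho_X=\mathrm{Tr}_{\overline X}|\phi\rangle\langle\phi|$, and $\rho_X^{{\bf i}t}$ is defined spectrally on the support of $\rho_X$, with $0^{{\bf i}t}:=0$. Instantaneous modular flow: $\mathcal I_X(t)|\phi\rangle:=\rho_X^{{\bf i}t}|\phi\rangle$, where $\rho_X$ is taken from the current state $|\phi\rangle$ on which the map acts. In a product of such maps and unitaries, applied right to left, each $\mathcal I_X(t)$ uses the reduced density matrix of the state produced by everything to its right. The maps are nonlinear. *)

theory Defs
  imports "HOL-Analysis.Analysis"
begin

text \<open>Sites form a finite type 'v; site v carries the Hilbert space C^(d v) with
basis {0..<d v}.  Vectors of the tensor product space are
complex-valued functions on configurations of UNIV (values elsewhere ignored / 0).\<close>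

definition confX :: "('v \<Rightarrow> nat) \<Rightarrow> 'v set \<Rightarrow> ('v \<Rightarrow> nat) set" where
  "confX d X = {c. \<forall>v. (v \<in> X \<longrightarrow> c v < d v) \<and> (v \<notin> X \<longrightarrow> c v = 0)}"

definition conf :: "('v \<Rightarrow> nat) \<Rightarrow> ('v \<Rightarrow> nat) set" where
  "conf d = confX d UNIV"

definition merge :: "'v set \<Rightarrow> ('v \<Rightarrow> nat) \<Rightarrow> ('v \<Rightarrow> nat) \<Rightarrow> ('v \<Rightarrow> nat)" where
  "merge X a e = (\<lambda>v. if v \<in> X then a v else e v)"

definition restr :: "'v set \<Rightarrow> ('v \<Rightarrow> nat) \<Rightarrow> ('v \<Rightarrow> nat)" where
  "restr X c = (\<lambda>v. if v \<in> X then c v else 0)"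

text \<open>Reduced density matrix rho_X = Tr_{complement X} |phi><phi| (as a kernel on confX d X).\<close>
definition rdm :: "('v \<Rightarrow> nat) \<Rightarrow> 'v set \<Rightarrow> (('v \<Rightarrow> nat) \<Rightarrow> complex)
    \<Rightarrow> ('v \<Rightarrow> nat) \<Rightarrow> ('v \<Rightarrow> nat) \<Rightarrow> complex" where
  "rdm d X \<phi> a b = (\<Sum>e\<in>confX d (- X). \<phi> (merge X a e) * cnj (\<phi> (merge X b e)))"

definition is_eigvec :: "'i set \<Rightarrow> ('i \<Rightarrow> 'i \<Rightarrow> complex) \<Rightarrow> complex \<Rightarrow> ('i \<Rightarrow> complex) \<Rightarrow> bool" where
  "is_eigvec S K l x \<longleftrightarrow> (\<exists>a\<in>S. x a \<noteq> 0) \<and> (\<forall>a\<in>S. (\<Sum>b\<in>S. K a b * x b) = l * x a)"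

text \<open>Spectral functional calculus f(K) for a diagonalizable (here: Hermitian) kernel K:
the operator on span S acting as multiplication by f(lambda) on every eigenvector
with eigenvalue lambda.\<close>
definition mat_fun :: "'i set \<Rightarrow> (complex \<Rightarrow> complex) \<Rightarrow> ('i \<Rightarrow> 'i \<Rightarrow> complex) \<Rightarrow> ('i \<Rightarrow> 'i \<Rightarrow> complex)" where
  "mat_fun S f K = (THE M. (\<forall>a b. M a b \<noteq> 0 \<longrightarrow> a \<in> S \<and> b \<in> S) \<and>
      (\<forall>l x. is_eigvec S K l x \<longrightarrow> (\<forall>a\<in>S. (\<Sum>b\<in>S. M a b * x b) = f l * x a)))"

text \<open>rho^{it} with 0^{it} = 0 (complex powr gives 0 powr z = 0; for positive reals
it is exp(i t ln lambda)).\<close>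
definition rho_it :: "('v \<Rightarrow> nat) \<Rightarrow> 'v set \<Rightarrow> real \<Rightarrow> (('v \<Rightarrow> nat) \<Rightarrow> complex)
    \<Rightarrow> ('v \<Rightarrow> nat) \<Rightarrow> ('v \<Rightarrow> nat) \<Rightarrow> complex" where
  "rho_it d X t \<phi> = mat_fun (confX d X) (\<lambda>l. l powr (\<i> * complex_of_real t)) (rdm d X \<phi>)"

text \<open>Instantiated modular flow I_X(t) phi = (rho_X^{it} (x) 1) phi, with rho_X from phi itself.\<close>
definition imf :: "('v \<Rightarrow> nat) \<Rightarrow> 'v set \<Rightarrow> real \<Rightarrow> (('v \<Rightarrow> nat) \<Rightarrow> complex) \<Rightarrow> (('v \<Rightarrow> nat) \<Rightarrow> complex)" where
  "imf d X t \<phi> = (\<lambda>c. if c \<in> conf d then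
      (\<Sum>a\<in>confX d X. rho_it d X t \<phi> (restr X c) a * \<phi> (merge X a c)) else 0)"

text \<open>seqflow d A ts j k phi = I_{A_{j+k-1}}(t_{j+k-1}) ... I_{A_j}(t_j) phi.\<close>
fun seqflow :: "('v \<Rightarrow> nat) \<Rightarrow> (nat \<Rightarrow> 'v set) \<Rightarrow> (nat \<Rightarrow> real) \<Rightarrow> nat \<Rightarrow> nat
    \<Rightarrow> (('v \<Rightarrow> nat) \<Rightarrow> complex) \<Rightarrow> (('v \<Rightarrow> nat) \<Rightarrow> complex)" where
  "seqflow d A ts j 0 \<phi> = \<phi>"
| "seqflow d A ts j (Suc k) \<phi> = imf d (A (j + k)) (ts (j + k)) (seqflow d A ts j k \<phi>)"

definition unitary_site :: "nat \<Rightarrow> (nat \<Rightarrow> nat \<Rightarrow> complex) \<Rightarrow> bool" where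
  "unitary_site n W \<longleftrightarrow> (\<forall>i<n. \<forall>j<n. (\<Sum>k<n. cnj (W k i) * W k j) = (if i = j then 1 else 0))"

definition onsite :: "('v::finite \<Rightarrow> nat) \<Rightarrow> ('v \<Rightarrow> nat \<Rightarrow> nat \<Rightarrow> complex)
    \<Rightarrow> (('v \<Rightarrow> nat) \<Rightarrow> complex) \<Rightarrow> (('v \<Rightarrow> nat) \<Rightarrow> complex)" where
  "onsite d Us \<phi> = (\<lambda>c. if c \<in> conf d then
      (\<Sum>c'\<in>conf d. (\<Prod>v\<in>UNIV. Us v (c v) (c' v)) * \<phi> c') else 0)"

end

theory Submission
  imports Defs "HOL-Library.Function_Algebras" "HOL-Computational_Algebra.Fundamental_Theorem_Algebra"
begin


definition opK :: "'i set \<Rightarrow> ('i\<Rightarrow>'i\<Rightarrow>complex) \<Rightarrow> ('i\<Rightarrow>complex) \<Rightarrow> ('i\<Rightarrow>complex)" where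
  "opK S K y = (\<lambda>a. if a \<in> S then (\<Sum>b\<in>S. K a b * y b) else 0)"

definition sc :: "complex \<Rightarrow> ('i\<Rightarrow>complex) \<Rightarrow> ('i\<Rightarrow>complex)" where
  "sc c y = (\<lambda>a. c * y a)"

definition inV :: "'i set \<Rightarrow> ('i\<Rightarrow>complex) \<Rightarrow> bool" where
  "inV S y \<longleftrightarrow> (\<forall>a. a \<notin> S \<longrightarrow> y a = 0)"

definition ev :: "'i \<Rightarrow> 'i \<Rightarrow> complex" where
  "ev b = (\<lambda>a. if a = b then 1 else 0)"

lemma sumf_apply: "(sum F B) a = (\<Sum>b\<in>B. F b a)"
  by (induction B rule: infinite_finite_induct) auto

lemma opK_add: "opK S K (y + z) = opK S K y + opK S K z"
  by (auto simp: opK_def distrib_left sum.distrib)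
lemma opK_sc: "opK S K (sc c y) = sc c (opK S K y)"
  by (auto simp: opK_def sc_def sum_distrib_left ac_simps)
lemma opK_0[simp]: "opK S K 0 = 0" by (auto simp: opK_def)
lemma sc_add: "sc (a + b) y = sc a y + sc b y" by (auto simp: sc_def distrib_right)
lemma sc_add2: "sc c (y + z) = sc c y + sc c z" by (auto simp: sc_def distrib_left)
lemma sc_sc: "sc c (sc a y) = sc (c * a) y" by (auto simp: sc_def)
lemma sc_0[simp]: "sc 0 y = 0" "sc c 0 = 0" by (auto simp: sc_def)
lemma sc_1[simp]: "sc 1 y = y" by (auto simp: sc_def)
lemma sc_m1: "sc (-1) y = - y" by (auto simp: sc_def)
lemma inV_opK: "inV S (opK S K y)" by (auto simp: inV_def opK_def)
lemma inV_sc: "inV S y \<Longrightarrow> inV S (sc c y)" by (auto simp: inV_def sc_def)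
lemma inV_add: "inV S y \<Longrightarrow> inV S z \<Longrightarrow> inV S (y + z)" by (auto simp: inV_def)


definition pev :: "'i set \<Rightarrow> ('i\<Rightarrow>'i\<Rightarrow>complex) \<Rightarrow> complex poly \<Rightarrow> ('i\<Rightarrow>complex) \<Rightarrow> ('i\<Rightarrow>complex)" where
  "pev S K p y = fold_coeffs (\<lambda>c z. sc c y + opK S K z) p 0"

lemma pev_0[simp]: "pev S K 0 y = 0" by (simp add: pev_def)

lemma pev_pCons: "pev S K (pCons c p) y = sc c y + opK S K (pev S K p y)"
proof (cases "p = 0 \<and> c = 0")
  case True then show ?thesis by simp
next
  case False
  then have "coeffs (pCons c p) = c # coeffs p" by (simp_all add: cCons_def)
  then show ?thesis by (simp add: pev_def fold_coeffs_def)
qed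

lemma pev_add: "pev S K (p + q) y = pev S K p y + pev S K q y"
proof (induction p arbitrary: q rule: pCons_induct)
  case 0 then show ?case by simp
next
  case (pCons a p)
  obtain b q' where q: "q = pCons b q'" by (cases q) auto
  have "pev S K (pCons a p + q) y = sc (a + b) y + opK S K (pev S K p y + pev S K q' y)"
    by (simp only: q add_pCons pev_pCons pCons.IH)
  also have "\<dots> = pev S K (pCons a p) y + pev S K q y"
    by (simp only: q pev_pCons sc_add opK_add add_ac)
  finally show ?case .
qed

lemma pev_smult: "pev S K (smult c p) y = sc c (pev S K p y)"
proof (induction p rule: pCons_induct)
  case (pCons a p)
  show ?case by (simp only: smult_pCons pev_pCons pCons.IH sc_add2 sc_sc opK_sc)
qed (simp only: smult_0_right pev_0 sc_0)

lemma pev_y0[simp]: "pev S K p 0 = 0"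
proof (induction p rule: pCons_induct)
  case (pCons a p)
  show ?case by (simp only: pev_pCons pCons.IH sc_0 opK_0 add_0)
qed simp

lemma pev_yadd: "pev S K p (y + z) = pev S K p y + pev S K p z"
proof (induction p rule: pCons_induct)
  case (pCons a p)
  show ?case by (simp only: pev_pCons pCons.IH sc_add2 opK_add add_ac)
qed simp

lemma pev_ysc: "pev S K p (sc c y) = sc c (pev S K p y)"
proof (induction p rule: pCons_induct)
  case (pCons a p)
  show ?case by (simp only: pev_pCons pCons.IH sc_add2 sc_sc opK_sc mult.commute)
qed (simp only: pev_0 sc_0)

lemma pev_mult: "pev S K (p * q) y = pev S K p (pev S K q y)"
proof (induction p rule: pCons_induct)
  case (pCons a p)
  show ?case by (simp only: mult_pCons_left pev_add pev_smult pev_pCons pCons.IH sc_0 add_0)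
qed simp

lemma pev_one[simp]: "pev S K 1 y = y"
  by (simp add: one_pCons pev_pCons)

lemma pev_lin: "pev S K [:c,1:] y = sc c y + opK S K y"
  by (simp add: pev_pCons)

lemma pev_const: "pev S K [:c:] y = sc c y"
  by (simp add: pev_pCons)

lemma pev_monom: "pev S K (monom c n) y = sc c ((opK S K ^^ n) y)"
proof (induction n)
  case 0 then show ?case by (simp add: monom_0 pev_const)
next
  case (Suc n) then show ?case by (simp add: monom_Suc pev_pCons opK_sc)
qed

lemma pev_sum: "finite I \<Longrightarrow> pev S K (\<Sum>i\<in>I. q i) y = (\<Sum>i\<in>I. pev S K (q i) y)"
proof (induction I rule: finite_induct)
  case (insert x G) then show ?case by (simp only: sum.insert[OF insert(1,2)] pev_add insert(3))
qed (simp only: sum.empty pev_0)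

lemma pev_ysum: "finite I \<Longrightarrow> pev S K p (\<Sum>i\<in>I. F i) = (\<Sum>i\<in>I. pev S K p (F i))"
proof (induction I rule: finite_induct)
  case (insert x G) then show ?case by (simp only: sum.insert[OF insert(1,2)] pev_yadd insert(3))
qed (simp only: sum.empty pev_y0)

lemma pev_eig: "opK S K y = sc l y \<Longrightarrow> pev S K p y = sc (poly p l) y"
proof (induction p rule: pCons_induct)
  case (pCons a p)
  show ?case by (simp only: pev_pCons pCons opK_sc sc_sc sc_add poly_pCons mult.commute)
qed simp

lemma inV_pev: "inV S y \<Longrightarrow> inV S (pev S K p y)"
  by (induction p rule: pCons_induct) (simp_all add: pev_pCons inV_def sc_def opK_def)

lemma V_expand: "inV S y \<Longrightarrow> finite S \<Longrightarrow> y = (\<Sum>b\<in>S. sc (y b) (ev b))"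
  by (rule ext) (simp_all add: sumf_apply sc_def ev_def inV_def if_distrib cong: if_cong)



lemma inV_w: "inV S y \<Longrightarrow> inV S ((opK S K ^^ i) y)"
  by (cases i) (simp_all add: inV_opK)

lemma annih:
  fixes y :: "'i \<Rightarrow> complex"
  assumes fin: "finite S" and yV: "inV S y"
  shows "\<exists>p. p \<noteq> 0 \<and> pev S K p y = 0"
proof -
  interpret fv: vector_space "sc :: complex \<Rightarrow> ('i\<Rightarrow>complex) \<Rightarrow> ('i\<Rightarrow>complex)"
    by unfold_locales (simp_all only: sc_add2 sc_add sc_sc sc_1)
  define N where "N = card S"
  define w where "w i = (opK S K ^^ i) y" for i
  show ?thesis
  proof (cases "inj_on w {0..N}")
    case False
    then obtain i j where ij: "i \<in> {0..N}" "j \<in> {0..N}" "i \<noteq> j" "w i = w j"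
      unfolding inj_on_def by blast
    let ?p = "monom 1 i + smult (-1) (monom (1::complex) j)"
    have "coeff ?p i = 1" using ij(3) by (simp add: coeff_monom)
    hence pnz: "?p \<noteq> 0" by (metis coeff_0 zero_neq_one)
    have "pev S K ?p y = w i + sc (-1) (w j)"
      by (simp only: pev_add pev_smult pev_monom sc_1 w_def)
    also have "\<dots> = 0" using ij by (simp add: sc_m1)
    finally show ?thesis using pnz by blast
  next
    case True
    define W where "W = w ` {0..N}"
    have cardW: "card W = N + 1" using True by (simp add: W_def card_image)
    have finW: "finite W" by (simp add: W_def)
    define E where "E = ev ` S"
    have cardE: "card E \<le> N" unfolding E_def N_def by (rule card_image_le[OF fin])
    have finE: "finite E" unfolding E_def using fin by simp
    have span: "W \<subseteq> fv.span E"
    proof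
      fix v assume "v \<in> W"
      then obtain i where v: "v = w i" by (auto simp: W_def)
      have "v = (\<Sum>b\<in>S. sc (v b) (ev b))"
        using V_expand[OF inV_w[OF yV] fin] v by (simp add: w_def)
      also have "\<dots> \<in> fv.span E"
        by (intro fv.span_sum fv.span_scale fv.span_base) (auto simp: E_def)
      finally show "v \<in> fv.span E" .
    qed
    have "fv.dependent W"
    proof (rule ccontr)
      assume "\<not> fv.dependent W"
      from fv.independent_span_bound[OF finE this span]
      have "card W \<le> card E" by auto
      with cardW cardE show False by simp
    qed
    then obtain u where u: "\<exists>v\<in>W. u v \<noteq> 0" "(\<Sum>v\<in>W. sc (u v) v) = 0"
      using fv.dependent_finite[OF finW] by blast
    define p where "p = (\<Sum>i\<in>{0..N}. monom (u (w i)) i)"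
    have "pev S K p y = (\<Sum>i\<in>{0..N}. sc (u (w i)) (w i))"
      by (simp only: p_def pev_sum[OF finite_atLeastAtMost] pev_monom w_def)
    also have "\<dots> = (\<Sum>v\<in>W. sc (u v) v)"
      unfolding W_def by (simp add: sum.reindex[OF True])
    also have "\<dots> = 0" by (rule u(2))
    finally have pz: "pev S K p y = 0" .
    obtain i0 where i0: "i0 \<in> {0..N}" "u (w i0) \<noteq> 0" using u(1) by (auto simp: W_def)
    have "coeff p i0 = (\<Sum>i\<in>{0..N}. if i0 = i then u (w i) else 0)"
      by (simp add: p_def coeff_sum coeff_monom)
    also have "\<dots> = u (w i0)" using i0(1) by (simp add: sum.delta)
    finally have "p \<noteq> 0" using i0(2) by auto
    with pz show ?thesis by blast
  qed
qed

definition inn :: "'i set \<Rightarrow> ('i\<Rightarrow>complex) \<Rightarrow> ('i\<Rightarrow>complex) \<Rightarrow> complex" where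
  "inn S x y = (\<Sum>a\<in>S. cnj (x a) * y a)"

definition herm :: "'i set \<Rightarrow> ('i\<Rightarrow>'i\<Rightarrow>complex) \<Rightarrow> bool" where
  "herm S K \<longleftrightarrow> (\<forall>a\<in>S. \<forall>b\<in>S. K a b = cnj (K b a))"

lemma inn_opK:
  assumes "herm S K"
  shows "inn S (opK S K x) y = inn S x (opK S K y)"
proof -
  have "inn S (opK S K x) y = (\<Sum>a\<in>S. \<Sum>b\<in>S. cnj (K a b) * cnj (x b) * y a)"
    by (simp add: inn_def opK_def sum_distrib_right)
  also have "\<dots> = (\<Sum>b\<in>S. \<Sum>a\<in>S. cnj (K a b) * cnj (x b) * y a)"
    by (rule sum.swap)
  also have "\<dots> = (\<Sum>b\<in>S. \<Sum>a\<in>S. cnj (x b) * (K b a * y a))"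
  proof (intro sum.cong refl)
    fix b a assume ab: "b \<in> S" "a \<in> S"
    have "K b a = cnj (K a b)" using assms ab unfolding herm_def by blast
    then have "cnj (K a b) = K b a" by simp
    then show "cnj (K a b) * cnj (x b) * y a = cnj (x b) * (K b a * y a)" by (simp add: ac_simps)
  qed
  also have "\<dots> = inn S x (opK S K y)"
    by (simp add: inn_def opK_def sum_distrib_left)
  finally show ?thesis .
qed

lemma inn_sc_left: "inn S (sc c x) y = cnj c * inn S x y"
  by (simp add: inn_def sc_def sum_distrib_left ac_simps)
lemma inn_sc_right: "inn S x (sc c y) = c * inn S x y"
  by (simp add: inn_def sc_def sum_distrib_left ac_simps)
lemma inn_add_left: "inn S (x + z) y = inn S x y + inn S z y"
  by (simp add: inn_def distrib_right sum.distrib)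

lemma inn_self:
  assumes "finite S" "inn S x x = 0" "a \<in> S"
  shows "x a = 0"
proof -
  have "inn S x x = (\<Sum>b\<in>S. complex_of_real ((norm (x b))\<^sup>2))"
    unfolding inn_def by (intro sum.cong refl) (simp only: complex_norm_square mult.commute)
  also have "\<dots> = complex_of_real (\<Sum>b\<in>S. (norm (x b))\<^sup>2)" by (simp only: of_real_sum)
  finally have "inn S x x = complex_of_real (\<Sum>b\<in>S. (norm (x b))\<^sup>2)" .
  with assms(2) have "complex_of_real (\<Sum>b\<in>S. (norm (x b))\<^sup>2) = 0" by metis
  then have "(\<Sum>b\<in>S. (norm (x b))\<^sup>2) = 0" by (simp only: of_real_eq_0_iff)
  with assms(1,3) have "(norm (x a))\<^sup>2 = 0"
    by (subst (asm) sum_nonneg_eq_0_iff) auto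
  then show ?thesis by simp
qed

lemma lin_eig:
  assumes "pev S K [:-r,1:] w = 0"
  shows "opK S K w = sc r w"
proof
  fix a
  from assms have "(sc (-r) w + opK S K w) a = 0" by (simp only: pev_lin zero_fun_apply)
  then show "opK S K w a = sc r w a" by (simp add: sc_def)
qed

lemma herm_sq:
  assumes fin: "finite S" and h: "herm S K" and vV: "inV S v"
    and sq: "pev S K [:-r,1:] (pev S K [:-r,1:] v) = 0"
  shows "pev S K [:-r,1:] v = 0"
proof -
  define w where "w = pev S K [:-r,1:] v"
  have wV: "inV S w" unfolding w_def by (rule inV_pev[OF vV])
  have ew: "opK S K w = sc r w" using sq unfolding w_def by (rule lin_eig)
  have i1: "inn S w (opK S K w) = r * inn S w w" by (simp only: ew inn_sc_right)
  have i2: "inn S (opK S K w) w = cnj r * inn S w w" by (simp only: ew inn_sc_left)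
  from i1 i2 inn_opK[OF h, of w w] have e1: "(r - cnj r) * inn S w w = 0"
    by (simp add: algebra_simps)
  have i3: "inn S w w = (r - cnj r) * inn S v w"
  proof -
    have "inn S w w = inn S (sc (-r) v + opK S K v) w" by (simp only: w_def pev_lin)
    also have "\<dots> = cnj (-r) * inn S v w + inn S v (opK S K w)"
      by (simp only: inn_add_left inn_sc_left inn_opK[OF h])
    also have "\<dots> = (r - cnj r) * inn S v w"
      by (simp only: ew inn_sc_right) (simp add: algebra_simps)
    finally show ?thesis .
  qed
  have "inn S w w = 0"
  proof (rule ccontr)
    assume ne: "inn S w w \<noteq> 0"
    with e1 have "r - cnj r = 0" by simp
    with i3 ne show False by simp
  qed
  then have "\<forall>a. w a = 0"
    using inn_self[OF fin] wV unfolding inV_def by blast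
  then show ?thesis unfolding w_def by (simp add: fun_eq_iff)
qed

inductive sumeig :: "'i set \<Rightarrow> ('i\<Rightarrow>'i\<Rightarrow>complex) \<Rightarrow> ('i\<Rightarrow>complex) \<Rightarrow> bool" for S K where
  se0: "sumeig S K 0"
| seS: "inV S y \<Longrightarrow> opK S K y = sc l y \<Longrightarrow> sumeig S K z \<Longrightarrow> sumeig S K (y + z)"

lemma sumeig_add: "sumeig S K y \<Longrightarrow> sumeig S K z \<Longrightarrow> sumeig S K (y + z)"
proof (induction rule: sumeig.induct)
  case se0 then show ?case by (simp only: add_0)
next
  case (seS y l z')
  have "sumeig S K (y + (z' + z))" by (rule sumeig.seS[OF seS(1,2) seS(4)[OF seS(5)]])
  then show ?case by (simp only: add.assoc)
qed

lemma sumeig_eig: "inV S y \<Longrightarrow> opK S K y = sc l y \<Longrightarrow> sumeig S K y"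
  using sumeig.seS[OF _ _ sumeig.se0] by (metis add_0_right)

lemma decomp:
  assumes fin: "finite S" and h: "herm S K"
  shows "p \<noteq> 0 \<Longrightarrow> inV S y \<Longrightarrow> pev S K p y = 0 \<Longrightarrow> sumeig S K y"
proof (induction "degree p" arbitrary: p y rule: less_induct)
  case less
  show ?case
  proof (cases "degree p = 0")
    case True
    then obtain c where p: "p = [:c:]" by (rule degree_eq_zeroE)
    with less.prems(1) have c: "c \<noteq> 0" by simp
    from less.prems(3) have "sc c y = 0" by (simp only: p pev_const)
    then have "\<forall>a. c * y a = 0" by (simp add: sc_def fun_eq_iff)
    with c have "y = 0" by (simp add: fun_eq_iff)
    then show ?thesis by (simp only: sumeig.se0)
  next
    case False
    then obtain r where "poly p r = 0"
      using fundamental_theorem_of_algebra constant_degree False by metis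
    then obtain q where pq: "p = [:-r,1:] * q" by (auto simp: poly_eq_0_iff_dvd dvd_def)
    with less.prems(1) have qnz: "q \<noteq> 0" by auto
    have d1: "degree p = degree [:-r,(1::complex):] + degree q"
      unfolding pq by (rule degree_mult_eq) (simp_all add: qnz)
    have d2: "degree [:-r,(1::complex):] = 1" by simp
    from d1 d2 have dq: "degree q < degree p" by linarith
    show ?thesis
    proof (cases "poly q r = 0")
      case True
      then obtain q' where qq: "q = [:-r,1:] * q'" by (auto simp: poly_eq_0_iff_dvd dvd_def)
      have "pev S K [:-r,1:] (pev S K [:-r,1:] (pev S K q' y)) = 0"
        using less.prems(3) by (simp only: pq qq pev_mult)
      then have "pev S K [:-r,1:] (pev S K q' y) = 0"
        by (rule herm_sq[OF fin h inV_pev[OF less.prems(2)]])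
      then have "pev S K q y = 0" by (simp only: qq pev_mult)
      then show ?thesis using less.hyps[OF dq qnz less.prems(2)] by blast
    next
      case False
      define c where "c = 1 / poly q r"
      have "poly (1 - smult c q) r = 0" using False by (simp add: c_def)
      then have "[:-r,1:] dvd (1 - smult c q)" by (simp only: poly_eq_0_iff_dvd)
      then obtain a where ha: "1 - smult c q = [:-r,1:] * a" by (elim dvdE)
      define u where "u = pev S K ([:-r,1:] * a) y"
      define w where "w = sc c (pev S K q y)"
      have one: "1 = [:-r,1:] * a + smult c q" using ha by (simp add: algebra_simps)
      have yuw: "y = u + w"
      proof -
        have "y = pev S K 1 y" by simp
        also have "\<dots> = u + w" by (subst one) (simp only: pev_add pev_smult u_def w_def)
        finally show ?thesis .
      qed
      have pe: "q * ([:-r,1:] * a) = a * p" by (simp only: pq ac_simps)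
      have "pev S K q u = pev S K (q * ([:-r,1:] * a)) y"
        unfolding u_def by (simp only: pev_mult)
      also have "\<dots> = pev S K (a * p) y" by (simp only: pe)
      also have "\<dots> = 0" by (simp only: pev_mult less.prems(3) pev_y0)
      finally have "pev S K q u = 0" .
      moreover have uV: "inV S u" unfolding u_def by (rule inV_pev[OF less.prems(2)])
      ultimately have su: "sumeig S K u" using less.hyps[OF dq qnz] by blast
      have "pev S K [:-r,1:] w = sc c (pev S K p y)"
        by (simp only: w_def pev_ysc pq pev_mult)
      also have "\<dots> = 0" by (simp only: less.prems(3) sc_0)
      finally have "opK S K w = sc r w" by (rule lin_eig)
      moreover have "inV S w" unfolding w_def by (rule inV_sc[OF inV_pev[OF less.prems(2)]])
      ultimately have "sumeig S K w" by (rule sumeig_eig[rotated])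
      with su have "sumeig S K (u + w)" by (rule sumeig_add)
      then show ?thesis using yuw by simp
    qed
  qed
qed

lemma all_sumeig:
  assumes "finite S" "herm S K" "inV S y"
  shows "sumeig S K y"
  using annih[OF assms(1,3), of K] decomp[OF assms(1,2)] assms(3) by blast




definition Pm :: "'i set \<Rightarrow> (complex \<Rightarrow> complex) \<Rightarrow> ('i\<Rightarrow>'i\<Rightarrow>complex) \<Rightarrow> ('i\<Rightarrow>'i\<Rightarrow>complex) \<Rightarrow> bool" where
  "Pm S f K M \<longleftrightarrow> (\<forall>a b. M a b \<noteq> 0 \<longrightarrow> a \<in> S \<and> b \<in> S) \<and>
      (\<forall>l x. is_eigvec S K l x \<longrightarrow> (\<forall>a\<in>S. (\<Sum>b\<in>S. M a b * x b) = f l * x a))"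

lemma mat_fun_Pm: "mat_fun S f K = (THE M. Pm S f K M)"
  by (simp add: mat_fun_def Pm_def)

lemma sumeig_Pm:
  assumes M1: "Pm S f K M1" and M2: "Pm S f K M2" and a: "a \<in> S"
  shows "sumeig S K y \<Longrightarrow> (\<Sum>b\<in>S. M1 a b * y b) = (\<Sum>b\<in>S. M2 a b * y b)"
proof (induction rule: sumeig.induct)
  case se0 show ?case by simp
next
  case (seS y l z)
  have ey: "(\<Sum>b\<in>S. M1 a b * y b) = (\<Sum>b\<in>S. M2 a b * y b)"
  proof (cases "\<exists>a\<in>S. y a \<noteq> 0")
    case True
    have "\<forall>c\<in>S. (\<Sum>b\<in>S. K c b * y b) = l * y c"
    proof
      fix c assume c: "c \<in> S"
      from fun_cong[OF seS(2), of c] c show "(\<Sum>b\<in>S. K c b * y b) = l * y c"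
        by (simp add: opK_def sc_def)
    qed
    hence "is_eigvec S K l y" using True by (simp add: is_eigvec_def)
    then have "(\<Sum>b\<in>S. M1 a b * y b) = f l * y a" "(\<Sum>b\<in>S. M2 a b * y b) = f l * y a"
      using M1 M2 a unfolding Pm_def by blast+
    then show ?thesis by simp
  next
    case False then show ?thesis by simp
  qed
  show ?case using ey seS(4) by (simp add: distrib_left sum.distrib)
qed

lemma sum_ev: "finite S \<Longrightarrow> b \<in> S \<Longrightarrow> (\<Sum>c\<in>S. M c * ev b c) = M b"
proof -
  assume "finite S" "b \<in> S"
  have "(\<Sum>c\<in>S. M c * ev b c) = (\<Sum>c\<in>S. if c = b then M c else 0)"
    by (intro sum.cong) (auto simp: ev_def)
  also have "\<dots> = M b" using \<open>finite S\<close> \<open>b \<in> S\<close> by (simp add: sum.delta)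
  finally show ?thesis .
qed

lemma Pm_unique:
  assumes fin: "finite S" and h: "herm S K" and M1: "Pm S f K M1" and M2: "Pm S f K M2"
  shows "M1 = M2"
proof (rule ext, rule ext)
  fix a b
  show "M1 a b = M2 a b"
  proof (cases "a \<in> S \<and> b \<in> S")
    case True
    have evV: "inV S (ev b)" using True by (simp add: inV_def ev_def)
    have "sumeig S K (ev b)" by (rule all_sumeig[OF fin h evV])
    from sumeig_Pm[OF M1 M2 _ this] True
    have "(\<Sum>c\<in>S. M1 a c * ev b c) = (\<Sum>c\<in>S. M2 a c * ev b c)" by blast
    then show ?thesis using True fin by (simp add: sum_ev)
  next
    case False
    then have "M1 a b = 0" "M2 a b = 0" using M1 M2 unfolding Pm_def by blast+
    then show ?thesis by simp
  qed
qed

lemma interp: "finite R \<Longrightarrow> \<exists>g. \<forall>r\<in>R. poly g r = (f r :: complex)"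
proof (induction R rule: finite_induct)
  case empty show ?case by simp
next
  case (insert r R)
  then obtain g where g: "\<forall>s\<in>R. poly g s = f s" by blast
  define z where "z = (\<Prod>s\<in>R. [:-s,1:])"
  have zr: "poly z r \<noteq> 0" using insert(1,2) by (auto simp: z_def poly_prod prod_zero_iff)
  have zs: "\<forall>s\<in>R. poly z s = 0" using insert(1) by (auto simp: z_def poly_prod prod_zero_iff)
  define g' where "g' = g + smult ((f r - poly g r) / poly z r) z"
  have "\<forall>s\<in>insert r R. poly g' s = f s" using g zr zs by (auto simp: g'_def)
  then show ?case by blast
qed

lemma Pm_exists:
  assumes fin: "finite S"
  shows "\<exists>M. Pm S f K M"
proof -
  have "\<forall>b\<in>S. \<exists>p. p \<noteq> 0 \<and> pev S K p (ev b) = 0"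
  proof
    fix b assume "b \<in> S"
    then have "inV S (ev b)" by (auto simp: inV_def ev_def)
    then show "\<exists>p. p \<noteq> 0 \<and> pev S K p (ev b) = 0" by (rule annih[OF fin])
  qed
  then obtain P where P: "\<forall>b\<in>S. P b \<noteq> 0 \<and> pev S K (P b) (ev b) = 0" by metis
  define q where "q = (\<Prod>b\<in>S. P b)"
  have qnz: "q \<noteq> 0" using P fin by (simp add: q_def prod_zero_iff)
  have qe: "pev S K q (ev b) = 0" if b: "b \<in> S" for b
  proof -
    have "q = (\<Prod>c\<in>S-{b}. P c) * P b" using fin b by (simp add: q_def prod.remove mult.commute)
    then have "pev S K q (ev b) = pev S K (\<Prod>c\<in>S-{b}. P c) (pev S K (P b) (ev b))"
      by (simp only: pev_mult)
    also have "\<dots> = 0" using P b by (simp only: pev_y0)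
    finally show ?thesis .
  qed
  have qV: "pev S K q x = 0" if xV: "inV S x" for x
  proof -
    have "x = (\<Sum>b\<in>S. sc (x b) (ev b))" by (rule V_expand[OF xV fin])
    then have "pev S K q x = pev S K q (\<Sum>b\<in>S. sc (x b) (ev b))" by (rule arg_cong)
    also have "\<dots> = (\<Sum>b\<in>S. sc (x b) (pev S K q (ev b)))" by (simp only: pev_ysum[OF fin] pev_ysc)
    also have "\<dots> = 0" by (rule sum.neutral) (simp add: qe)
    finally show ?thesis .
  qed
  obtain g where g: "\<forall>r\<in>{r. poly q r = 0}. poly g r = f r"
    using interp[OF poly_roots_finite[OF qnz]] by blast
  define M where "M a b = (if a \<in> S \<and> b \<in> S then pev S K g (ev b) a else 0)" for a b
  have "Pm S f K M"
    unfolding Pm_def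
  proof (rule conjI)
    show "\<forall>a b. M a b \<noteq> 0 \<longrightarrow> a \<in> S \<and> b \<in> S" by (auto simp: M_def split: if_splits)
  next
    show "\<forall>l x. is_eigvec S K l x \<longrightarrow> (\<forall>a\<in>S. (\<Sum>b\<in>S. M a b * x b) = f l * x a)"
  proof (intro allI impI ballI)
    fix l x a assume ev: "is_eigvec S K l x" and a: "a \<in> S"
    define x' where "x' = (\<lambda>a. if a \<in> S then x a else 0)"
    have x'V: "inV S x'" by (simp add: inV_def x'_def)
    have ex: "opK S K x' = sc l x'"
    proof
      fix c show "opK S K x' c = sc l x' c"
      proof (cases "c \<in> S")
        case True
        have "(\<Sum>b\<in>S. K c b * x' b) = (\<Sum>b\<in>S. K c b * x b)" by (intro sum.cong) (auto simp: x'_def)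
        also have "\<dots> = l * x c" using ev True by (simp add: is_eigvec_def)
        finally show ?thesis using True by (simp add: opK_def sc_def x'_def)
      next
        case False then show ?thesis by (simp add: opK_def sc_def x'_def)
      qed
    qed
    obtain a0 where a0: "a0 \<in> S" "x a0 \<noteq> 0" using ev by (auto simp: is_eigvec_def)
    have "sc (poly q l) x' = 0" using qV[OF x'V] pev_eig[OF ex, of q] by simp
    hence "poly q l * x' a0 = 0" unfolding sc_def by (metis zero_fun_apply)
    hence "poly q l = 0" using a0 by (simp add: x'_def)
    hence gl: "poly g l = f l" using g by blast
    have "(\<Sum>b\<in>S. M a b * x b) = (\<Sum>b\<in>S. x' b * pev S K g (ev b) a)"
      using a by (intro sum.cong) (auto simp: M_def x'_def)
    also have "\<dots> = pev S K g (\<Sum>b\<in>S. sc (x' b) (ev b)) a"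
      by (simp only: pev_ysum[OF fin] pev_ysc sumf_apply) (simp only: sc_def)
    also have "\<dots> = pev S K g x' a" by (simp only: V_expand[OF x'V fin, symmetric])
    also have "\<dots> = f l * x a" using pev_eig[OF ex, of g] gl a by (simp add: sc_def x'_def)
    finally show "(\<Sum>b\<in>S. M a b * x b) = f l * x a" .
  qed
  qed
  then show ?thesis by blast
qed

lemma mat_fun_char:
  assumes "finite S" "herm S K"
  shows "Pm S f K (mat_fun S f K)"
proof -
  have "\<exists>!M. Pm S f K M" using Pm_exists[OF assms(1)] Pm_unique[OF assms] by blast
  then show ?thesis unfolding mat_fun_Pm by (rule theI')
qed

lemma mat_fun_eq:
  assumes "finite S" "herm S K" "Pm S f K M"
  shows "mat_fun S f K = M"
  using Pm_unique[OF assms(1,2) mat_fun_char[OF assms(1,2)] assms(3)] .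




definition mv :: "'i set \<Rightarrow> ('j\<Rightarrow>'i\<Rightarrow>complex) \<Rightarrow> ('i\<Rightarrow>complex) \<Rightarrow> ('j\<Rightarrow>complex)" where
  "mv S A x = (\<lambda>a. \<Sum>b\<in>S. A a b * x b)"
definition mm :: "'i set \<Rightarrow> ('j\<Rightarrow>'i\<Rightarrow>complex) \<Rightarrow> ('i\<Rightarrow>'k\<Rightarrow>complex) \<Rightarrow> ('j\<Rightarrow>'k\<Rightarrow>complex)" where
  "mm S A B = (\<lambda>a b. \<Sum>k\<in>S. A a k * B k b)"
definition adj :: "('i\<Rightarrow>'j\<Rightarrow>complex) \<Rightarrow> ('j\<Rightarrow>'i\<Rightarrow>complex)" where
  "adj A = (\<lambda>a b. cnj (A b a))"

lemma mv_mm: "mv S (mm S' A B) x a = mv S' A (mv S B x) a"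
proof -
  have "mv S (mm S' A B) x a = (\<Sum>b\<in>S. \<Sum>k\<in>S'. A a k * B k b * x b)"
    by (simp add: mv_def mm_def sum_distrib_right)
  also have "\<dots> = (\<Sum>k\<in>S'. \<Sum>b\<in>S. A a k * (B k b * x b))"
    by (subst sum.swap) (simp add: mult.assoc)
  also have "\<dots> = mv S' A (mv S B x) a"
    by (simp add: mv_def sum_distrib_left)
  finally show ?thesis .
qed

lemma mm_assoc: "mm S2 (mm S1 A B) C a c = mm S1 A (mm S2 B C) a c"
proof -
  have "mm S2 (mm S1 A B) C a c = (\<Sum>j\<in>S2. \<Sum>k\<in>S1. A a k * B k j * C j c)"
    by (simp add: mm_def sum_distrib_right)
  also have "\<dots> = (\<Sum>k\<in>S1. \<Sum>j\<in>S2. A a k * (B k j * C j c))"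
    by (subst sum.swap) (simp add: mult.assoc)
  also have "\<dots> = mm S1 A (mm S2 B C) a c"
    by (simp add: mm_def sum_distrib_left)
  finally show ?thesis .
qed

lemma mv_cong: "(\<And>b. b \<in> S \<Longrightarrow> x b = y b) \<Longrightarrow> mv S A x a = mv S A y a"
  by (simp add: mv_def)
lemma mv_cong_mat: "(\<And>b. b \<in> S \<Longrightarrow> A a b = B a b) \<Longrightarrow> mv S A x a = mv S B x a"
  by (simp add: mv_def)
lemma mm_cong_right: "(\<And>k. k \<in> S \<Longrightarrow> B k c = B' k c) \<Longrightarrow> mm S A B a c = mm S A B' a c"
  by (simp add: mm_def)
lemma mv_scale: "mv S A (\<lambda>b. l * x b) a = l * mv S A x a"
  by (simp add: mv_def sum_distrib_left ac_simps)

lemma mv_id: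
  assumes "finite S" "\<forall>a\<in>S. \<forall>b\<in>S. A a b = (if a = b then 1 else 0)" "a \<in> S"
  shows "mv S A x a = x a"
proof -
  have "mv S A x a = (\<Sum>b\<in>S. if a = b then x b else 0)"
    unfolding mv_def using assms(2,3) by (intro sum.cong) auto
  also have "\<dots> = x a" using assms(1,3) by (simp add: sum.delta)
  finally show ?thesis .
qed

lemma mm_id_left:
  assumes "finite S" "\<forall>a\<in>S. \<forall>b\<in>S. A a b = (if a = b then 1 else 0)" "a \<in> S"
  shows "mm S A B a c = B a c"
  using mv_id[OF assms, of "\<lambda>k. B k c"] by (simp add: mv_def mm_def)

lemma Pm_transfer:
  assumes fin: "finite S"
    and U1: "\<forall>a\<in>S. \<forall>b\<in>S. mm S (adj W) W a b = (if a = b then 1 else 0)"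
    and U2: "\<forall>a\<in>S. \<forall>b\<in>S. mm S W (adj W) a b = (if a = b then 1 else 0)"
    and K': "\<forall>a\<in>S. \<forall>b\<in>S. K' a b = mm S (mm S W K) (adj W) a b"
    and M: "Pm S f K M"
  shows "Pm S f K' (\<lambda>a b. if a \<in> S \<and> b \<in> S then mm S (mm S W M) (adj W) a b else 0)"
  unfolding Pm_def
proof (rule conjI)
  show "\<forall>a b. (if a \<in> S \<and> b \<in> S then mm S (mm S W M) (adj W) a b else 0) \<noteq> 0 \<longrightarrow> a \<in> S \<and> b \<in> S"
    by auto
next
  show "\<forall>l x. is_eigvec S K' l x \<longrightarrow> (\<forall>a\<in>S. (\<Sum>b\<in>S. (if a \<in> S \<and> b \<in> S then mm S (mm S W M) (adj W) a b else 0) * x b) = f l * x a)"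
  proof (intro allI impI ballI)
    fix l x a assume ev: "is_eigvec S K' l x" and a: "a \<in> S"
    define y where "y = mv S (adj W) x"
    have I1: "mv S W y c = x c" if c: "c \<in> S" for c
      unfolding y_def mv_mm[symmetric] by (rule mv_id[OF fin U2 c])
    have eK': "mv S K' x c = l * x c" if "c \<in> S" for c
      using ev that by (simp add: is_eigvec_def mv_def)
    have I2: "mv S K y c = l * y c" if c: "c \<in> S" for c
    proof -
      have "l * y c = mv S (adj W) (\<lambda>b. l * x b) c" by (simp add: y_def mv_scale)
      also have "\<dots> = mv S (adj W) (mv S K' x) c" by (rule mv_cong) (simp add: eK')
      also have "\<dots> = mv S (adj W) (mv S (mm S (mm S W K) (adj W)) x) c"
        by (rule mv_cong, rule mv_cong_mat) (simp add: K')
      also have "\<dots> = mv S (adj W) (mv S (mm S W K) y) c"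
        by (rule mv_cong) (simp add: mv_mm y_def)
      also have "\<dots> = mv S (adj W) (mv S W (mv S K y)) c"
        by (rule mv_cong) (simp add: mv_mm)
      also have "\<dots> = mv S (mm S (adj W) W) (mv S K y) c" by (simp add: mv_mm)
      also have "\<dots> = mv S K y c" by (rule mv_id[OF fin U1 c])
      finally show ?thesis by simp
    qed
    obtain a0 where a0: "a0 \<in> S" "x a0 \<noteq> 0" using ev by (auto simp: is_eigvec_def)
    have "\<exists>b\<in>S. y b \<noteq> 0"
    proof (rule ccontr)
      assume "\<not> (\<exists>b\<in>S. y b \<noteq> 0)"
      then have "mv S W y a0 = 0" by (simp add: mv_def)
      with I1[OF a0(1)] a0(2) show False by simp
    qed
    with I2 have "is_eigvec S K l y" by (simp add: is_eigvec_def mv_def)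
    with M have PM: "mv S M y c = f l * y c" if "c \<in> S" for c
      using that unfolding Pm_def mv_def by blast
    have "(\<Sum>b\<in>S. (if a \<in> S \<and> b \<in> S then mm S (mm S W M) (adj W) a b else 0) * x b)
        = mv S (mm S (mm S W M) (adj W)) x a"
      unfolding mv_def using a by (intro sum.cong) auto
    also have "\<dots> = mv S W (mv S M y) a" by (simp add: mv_mm y_def)
    also have "\<dots> = mv S W (\<lambda>c. f l * y c) a" by (rule mv_cong) (simp add: PM)
    also have "\<dots> = f l * x a" by (simp add: mv_scale I1[OF a])
    finally show "(\<Sum>b\<in>S. (if a \<in> S \<and> b \<in> S then mm S (mm S W M) (adj W) a b else 0) * x b) = f l * x a" .
  qed
qed

lemma co_unitary:
  assumes fin: "finite S"
    and U1: "\<forall>a\<in>S. \<forall>b\<in>S. mm S (adj W) W a b = (if a = b then 1 else 0)"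
  shows "\<forall>a\<in>S. \<forall>b\<in>S. mm S W (adj W) a b = (if a = b then 1 else 0)"
proof -
  define P where "P = mm S W (adj W)"
  have PC: "cnj (P a b) = P b a" for a b by (simp add: P_def mm_def adj_def mult.commute)
  have A: "(\<Sum>a\<in>S. P a a) = of_nat (card S)"
  proof -
    have "(\<Sum>a\<in>S. P a a) = (\<Sum>k\<in>S. \<Sum>a\<in>S. cnj (W a k) * W a k)"
      by (simp add: P_def mm_def adj_def mult.commute) (rule sum.swap)
    also have "\<dots> = (\<Sum>k\<in>S. 1)"
      using U1 by (intro sum.cong refl) (simp add: mm_def adj_def)
    finally show ?thesis by simp
  qed
  have B: "(\<Sum>b\<in>S. P a b * P b a) = P a a" if a: "a \<in> S" for a
  proof -
    have "(\<Sum>b\<in>S. P a b * P b a) = mm S P P a a" by (simp add: mm_def)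
    also have "\<dots> = mm S W (mm S (adj W) (mm S W (adj W))) a a"
      unfolding P_def by (simp add: mm_assoc)
    also have "\<dots> = mm S W (mm S (mm S (adj W) W) (adj W)) a a"
      by (rule mm_cong_right) (simp only: mm_assoc)
    also have "\<dots> = mm S W (adj W) a a"
      by (rule mm_cong_right) (rule mm_id_left[OF fin U1])
    finally show ?thesis by (simp add: P_def)
  qed
  have D: "(\<Sum>b\<in>S. ((if a = b then 1 else 0) - P a b) * ((if a = b then 1 else 0) - P b a)) = 1 - P a a"
    if a: "a \<in> S" for a
  proof -
    have "(\<Sum>b\<in>S. ((if a = b then 1 else 0) - P a b) * ((if a = b then 1 else 0) - P b a))
        = (\<Sum>b\<in>S. (if a = b then 1 - P a b - P b a else 0) + P a b * P b a)"
      by (intro sum.cong refl) (simp add: algebra_simps)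
    also have "\<dots> = (1 - P a a - P a a) + P a a"
      using fin a by (simp add: sum.distrib B sum.delta)
    finally show ?thesis by simp
  qed
  have E: "(\<Sum>a\<in>S. \<Sum>b\<in>S. ((if a = b then 1 else 0) - P a b) * ((if a = b then 1 else 0) - P b a)) = 0"
  proof -
    have "(\<Sum>a\<in>S. \<Sum>b\<in>S. ((if a = b then 1 else 0) - P a b) * ((if a = b then 1 else 0) - P b a))
        = (\<Sum>a\<in>S. 1 - P a a)" by (intro sum.cong refl) (rule D)
    also have "\<dots> = 0" by (simp add: sum_subtractf A)
    finally show ?thesis .
  qed
  define Q where "Q a b = (if a = b then 1 else 0) - P a b" for a b
  have F: "((if a = b then 1 else 0) - P a b) * ((if a = b then 1 else 0) - P b a)
      = complex_of_real ((norm (Q a b))\<^sup>2)" for a b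
  proof -
    have c: "cnj (Q a b) = (if a = b then 1 else 0) - P b a" by (simp add: Q_def PC)
    have "((if a = b then 1 else 0) - P a b) * ((if a = b then 1 else 0) - P b a) = Q a b * cnj (Q a b)"
      by (subst c) (simp only: Q_def)
    also have "\<dots> = complex_of_real ((norm (Q a b))\<^sup>2)" by (rule complex_norm_square[symmetric])
    finally show ?thesis .
  qed
  have "(\<Sum>a\<in>S. \<Sum>b\<in>S. complex_of_real ((norm (Q a b))\<^sup>2)) = 0" using E by (simp only: F)
  then have "complex_of_real (\<Sum>a\<in>S. \<Sum>b\<in>S. (norm (Q a b))\<^sup>2) = 0" by (simp only: of_real_sum)
  then have Z: "(\<Sum>a\<in>S. \<Sum>b\<in>S. (norm (Q a b))\<^sup>2) = 0" by (simp only: of_real_eq_0_iff)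
  show ?thesis
  proof (intro ballI)
    fix a b assume a: "a \<in> S" and b: "b \<in> S"
    have Z1: "\<forall>a\<in>S. (\<Sum>b\<in>S. (norm (Q a b))\<^sup>2) = 0"
      using Z by (subst (asm) sum_nonneg_eq_0_iff[OF fin]) (auto intro: sum_nonneg)
    then have "(\<Sum>b\<in>S. (norm (Q a b))\<^sup>2) = 0" using a by blast
    then have "\<forall>b\<in>S. (norm (Q a b))\<^sup>2 = 0"
      by (subst (asm) sum_nonneg_eq_0_iff[OF fin]) auto
    then have "(norm (Q a b))\<^sup>2 = 0" using b by blast
    then have "Q a b = 0" by simp
    then show "mm S W (adj W) a b = (if a = b then 1 else 0)" by (simp add: Q_def P_def)
  qed
qed




lemma finite_confX: "finite (confX d (X::'v::finite set))"
proof -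
  have "confX d X \<subseteq> PiE UNIV (\<lambda>v. {..d v})"
    by (auto simp: confX_def PiE_def extensional_def) (metis less_imp_le_nat zero_le)
  then show ?thesis by (rule finite_subset) (rule finite_PiE; simp)
qed

lemma restr_merge1: "a \<in> confX d X \<Longrightarrow> restr X (merge X a e) = a"
  by (auto simp: restr_def merge_def confX_def fun_eq_iff)
lemma restr_merge2: "e \<in> confX d (-X) \<Longrightarrow> restr (-X) (merge X a e) = e"
  by (auto simp: restr_def merge_def confX_def fun_eq_iff)
lemma merge_in: "a \<in> confX d X \<Longrightarrow> e \<in> confX d (-X) \<Longrightarrow> merge X a e \<in> conf d"
  by (auto simp: conf_def confX_def merge_def)
lemma restr_in1: "c \<in> conf d \<Longrightarrow> restr X c \<in> confX d X"
  by (auto simp: conf_def confX_def restr_def)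
lemma restr_in2: "c \<in> conf d \<Longrightarrow> restr (-X) c \<in> confX d (-X)"
  by (auto simp: conf_def confX_def restr_def)
lemma merge_restr: "merge X (restr X c) (restr (-X) c) = c"
  by (auto simp: fun_eq_iff merge_def restr_def)
lemma merge_merge: "merge X a' (merge X a e) = merge X a' e"
  by (auto simp: fun_eq_iff merge_def)

lemma sum_conf:
  "(\<Sum>c\<in>conf d. G c) = (\<Sum>a\<in>confX d X. \<Sum>e\<in>confX d (-X). G (merge X a e))"
proof -
  let ?h = "\<lambda>x. merge X (fst x) (snd x)"
  have bij: "bij_betw ?h (confX d X \<times> confX d (-X)) (conf d)"
    unfolding bij_betw_def
  proof
    show "inj_on ?h (confX d X \<times> confX d (-X))"
    proof (rule inj_onI)
      fix x y assume x: "x \<in> confX d X \<times> confX d (-X)" and y: "y \<in> confX d X \<times> confX d (-X)"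
        and eq: "?h x = ?h y"
      from eq have "restr X (?h x) = restr X (?h y)" "restr (-X) (?h x) = restr (-X) (?h y)" by simp_all
      with x y have "fst x = fst y" "snd x = snd y"
        by (auto simp: restr_merge1 restr_merge2)
      then show "x = y" by (simp add: prod_eq_iff)
    qed
    show "?h ` (confX d X \<times> confX d (-X)) = conf d"
    proof
      show "?h ` (confX d X \<times> confX d (-X)) \<subseteq> conf d" by (auto intro: merge_in)
      show "conf d \<subseteq> ?h ` (confX d X \<times> confX d (-X))"
      proof
        fix c assume c: "c \<in> conf d"
        have "c = ?h (restr X c, restr (-X) c)" by (simp add: merge_restr)
        moreover have "(restr X c, restr (-X) c) \<in> confX d X \<times> confX d (-X)"
          using c by (simp add: restr_in1 restr_in2)
        ultimately show "c \<in> ?h ` (confX d X \<times> confX d (-X))" by blast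
      qed
    qed
  qed
  have "(\<Sum>a\<in>confX d X. \<Sum>e\<in>confX d (-X). G (merge X a e))
      = (\<Sum>x\<in>confX d X \<times> confX d (-X). G (?h x))"
    by (simp add: sum.cartesian_product split_def)
  also have "\<dots> = (\<Sum>c\<in>conf d. G c)" by (rule sum.reindex_bij_betw[OF bij])
  finally show ?thesis by simp
qed

definition UXd :: "('v \<Rightarrow> nat \<Rightarrow> nat \<Rightarrow> complex) \<Rightarrow> 'v set \<Rightarrow> ('v\<Rightarrow>nat) \<Rightarrow> ('v\<Rightarrow>nat) \<Rightarrow> complex" where
  "UXd Us Y a b = (\<Prod>v\<in>Y. Us v (a v) (b v))"

lemma prod_split:
  fixes c c' :: "'v::finite \<Rightarrow> nat"
  shows "(\<Prod>v\<in>UNIV. Us v (c v) (c' v))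
    = UXd Us X (restr X c) (restr X c') * UXd Us (-X) (restr (-X) c) (restr (-X) c')"
proof -
  have "(\<Prod>v\<in>UNIV. Us v (c v) (c' v)) = (\<Prod>v\<in>X \<union> -X. Us v (c v) (c' v))" by simp
  also have "\<dots> = (\<Prod>v\<in>X. Us v (c v) (c' v)) * (\<Prod>v\<in>-X. Us v (c v) (c' v))"
    by (rule prod.union_disjoint) auto
  also have "\<dots> = UXd Us X (restr X c) (restr X c') * UXd Us (-X) (restr (-X) c) (restr (-X) c')"
    unfolding UXd_def by (intro arg_cong2[where f="(*)"] prod.cong refl) (auto simp: restr_def)
  finally show ?thesis .
qed

lemma prod_split_merge:
  fixes a :: "'v::finite \<Rightarrow> nat"
  shows "(\<Prod>v\<in>UNIV. Us v (merge X a e v) (merge X a' e' v)) = UXd Us X a a' * UXd Us (-X) e e'"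
proof -
  have "(\<Prod>v\<in>UNIV. Us v (merge X a e v) (merge X a' e' v))
      = (\<Prod>v\<in>X \<union> -X. Us v (merge X a e v) (merge X a' e' v))" by simp
  also have "\<dots> = (\<Prod>v\<in>X. Us v (merge X a e v) (merge X a' e' v)) * (\<Prod>v\<in>-X. Us v (merge X a e v) (merge X a' e' v))"
    by (rule prod.union_disjoint) auto
  also have "\<dots> = UXd Us X a a' * UXd Us (-X) e e'"
    unfolding UXd_def by (intro arg_cong2[where f="(*)"] prod.cong refl) (auto simp: merge_def)
  finally show ?thesis .
qed

lemma onsite_merge:
  fixes d :: "'v::finite \<Rightarrow> nat"
  assumes a: "a \<in> confX d X" and e: "e \<in> confX d (-X)"
  shows "onsite d Us \<phi> (merge X a e)
    = mv (confX d X) (UXd Us X) (\<lambda>a'. \<Sum>e'\<in>confX d (-X). UXd Us (-X) e e' * \<phi> (merge X a' e')) a"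
proof -
  have "onsite d Us \<phi> (merge X a e)
      = (\<Sum>c'\<in>conf d. (\<Prod>v\<in>UNIV. Us v (merge X a e v) (c' v)) * \<phi> c')"
    using merge_in[OF a e] by (simp add: onsite_def)
  also have "\<dots> = (\<Sum>a'\<in>confX d X. \<Sum>e'\<in>confX d (-X).
      (\<Prod>v\<in>UNIV. Us v (merge X a e v) (merge X a' e' v)) * \<phi> (merge X a' e'))"
    by (rule sum_conf)
  also have "\<dots> = (\<Sum>a'\<in>confX d X. \<Sum>e'\<in>confX d (-X).
      UXd Us X a a' * (UXd Us (-X) e e' * \<phi> (merge X a' e')))"
  proof (intro sum.cong refl)
    fix a' e' assume a': "a' \<in> confX d X" and e': "e' \<in> confX d (-X)"
    have "(\<Prod>v\<in>UNIV. Us v (merge X a e v) (merge X a' e' v)) = UXd Us X a a' * UXd Us (-X) e e'"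
      by (rule prod_split_merge)
    then show "(\<Prod>v\<in>UNIV. Us v (merge X a e v) (merge X a' e' v)) * \<phi> (merge X a' e')
        = UXd Us X a a' * (UXd Us (-X) e e' * \<phi> (merge X a' e'))" by (simp only: mult.assoc)
  qed
  also have "\<dots> = mv (confX d X) (UXd Us X) (\<lambda>a'. \<Sum>e'\<in>confX d (-X). UXd Us (-X) e e' * \<phi> (merge X a' e')) a"
    by (simp add: mv_def sum_distrib_left)
  finally show ?thesis .
qed

lemma imf_merge:
  assumes a: "a \<in> confX d X" and e: "e \<in> confX d (-X)"
  shows "imf d X t \<phi> (merge X a e) = mv (confX d X) (rho_it d X t \<phi>) (\<lambda>a'. \<phi> (merge X a' e)) a"
  using merge_in[OF a e] by (simp add: imf_def restr_merge1[OF a] merge_merge mv_def)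

lemma herm_rdm: "herm (confX d X) (rdm d X \<phi>)"
  by (simp add: herm_def rdm_def mult.commute)

lemma sum_prod_confX:
  "finite Y \<Longrightarrow> (\<Sum>k\<in>confX d Y. \<Prod>v\<in>Y. g v (k v)) = (\<Prod>v\<in>Y. \<Sum>j<d v. (g v j :: complex))"
proof (induction Y rule: finite_induct)
  case empty
  have "confX d {} = {\<lambda>_. 0}" by (auto simp: confX_def)
  then show ?case by simp
next
  case (insert w Y)
  let ?h = "\<lambda>x. (snd x)(w := fst x)"
  have bij: "bij_betw ?h ({..<d w} \<times> confX d Y) (confX d (insert w Y))"
    unfolding bij_betw_def
  proof
    show "inj_on ?h ({..<d w} \<times> confX d Y)"
    proof (rule inj_onI)
      fix x y assume x: "x \<in> {..<d w} \<times> confX d Y" and y: "y \<in> {..<d w} \<times> confX d Y"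
        and eq: "?h x = ?h y"
      from eq have "?h x w = ?h y w" by simp
      then have 1: "fst x = fst y" by simp
      have "snd x = snd y"
      proof
        fix v show "snd x v = snd y v"
        proof (cases "v = w")
          case True
          with x y insert(2) show ?thesis by (auto simp: confX_def)
        next
          case False
          from eq have "?h x v = ?h y v" by simp
          with False show ?thesis by simp
        qed
      qed
      with 1 show "x = y" by (simp add: prod_eq_iff)
    qed
    show "?h ` ({..<d w} \<times> confX d Y) = confX d (insert w Y)"
    proof
      show "?h ` ({..<d w} \<times> confX d Y) \<subseteq> confX d (insert w Y)"
        using insert(2) by (auto simp: confX_def)
      show "confX d (insert w Y) \<subseteq> ?h ` ({..<d w} \<times> confX d Y)"
      proof
        fix f assume f: "f \<in> confX d (insert w Y)"
        have "f = ?h (f w, f(w := 0))" by simp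
        moreover have "(f w, f(w := 0)) \<in> {..<d w} \<times> confX d Y"
          using f insert(2) by (auto simp: confX_def)
        ultimately show "f \<in> ?h ` ({..<d w} \<times> confX d Y)" by blast
      qed
    qed
  qed
  have "(\<Sum>k\<in>confX d (insert w Y). \<Prod>v\<in>insert w Y. g v (k v))
      = (\<Sum>x\<in>{..<d w} \<times> confX d Y. \<Prod>v\<in>insert w Y. g v (?h x v))"
    by (rule sum.reindex_bij_betw[OF bij, symmetric])
  also have "\<dots> = (\<Sum>x\<in>{..<d w} \<times> confX d Y. g w (fst x) * (\<Prod>v\<in>Y. g v (snd x v)))"
  proof (intro sum.cong refl)
    fix x
    have "(\<Prod>v\<in>Y. g v (?h x v)) = (\<Prod>v\<in>Y. g v (snd x v))"
      using insert(2) by (intro prod.cong refl) auto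
    then show "(\<Prod>v\<in>insert w Y. g v (?h x v)) = g w (fst x) * (\<Prod>v\<in>Y. g v (snd x v))"
      using insert(1,2) by simp
  qed
  also have "\<dots> = (\<Sum>j<d w. \<Sum>k\<in>confX d Y. g w j * (\<Prod>v\<in>Y. g v (k v)))"
    by (simp only: sum.cartesian_product' fst_conv snd_conv)
  also have "\<dots> = (\<Sum>j<d w. g w j) * (\<Sum>k\<in>confX d Y. \<Prod>v\<in>Y. g v (k v))"
    by (subst sum_distrib_right) (simp only: sum_distrib_left)
  also have "\<dots> = (\<Prod>v\<in>insert w Y. \<Sum>j<d v. g v j)"
    using insert by simp
  finally show ?case .
qed

lemma prod_delta: "finite Y \<Longrightarrow> (\<Prod>v\<in>Y. (if P v then 1 else (0::complex))) = (if \<forall>v\<in>Y. P v then 1 else 0)"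
  by (induction rule: finite_induct) auto

lemma unitary_UX:
  fixes d :: "'v::finite \<Rightarrow> nat"
  assumes U: "\<forall>v. unitary_site (d v) (Us v)"
  shows "\<forall>a\<in>confX d Y. \<forall>b\<in>confX d Y.
    mm (confX d Y) (adj (UXd Us Y)) (UXd Us Y) a b = (if a = b then 1 else 0)"
proof (intro ballI)
  fix a b assume a: "a \<in> confX d Y" and b: "b \<in> confX d Y"
  have "mm (confX d Y) (adj (UXd Us Y)) (UXd Us Y) a b
      = (\<Sum>k\<in>confX d Y. \<Prod>v\<in>Y. cnj (Us v (k v) (a v)) * Us v (k v) (b v))"
    by (simp add: mm_def adj_def UXd_def prod.distrib)
  also have "\<dots> = (\<Prod>v\<in>Y. \<Sum>j<d v. cnj (Us v j (a v)) * Us v j (b v))"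
    by (rule sum_prod_confX[where g = "\<lambda>v j. cnj (Us v j (a v)) * Us v j (b v)"]) simp
  also have "\<dots> = (\<Prod>v\<in>Y. if a v = b v then 1 else 0)"
  proof (intro prod.cong refl)
    fix v assume v: "v \<in> Y"
    with a b have "a v < d v" "b v < d v" by (auto simp: confX_def)
    with U show "(\<Sum>j<d v. cnj (Us v j (a v)) * Us v j (b v)) = (if a v = b v then 1 else 0)"
      by (simp add: unitary_site_def)
  qed
  also have "\<dots> = (if \<forall>v\<in>Y. a v = b v then 1 else 0)" by (rule prod_delta) simp
  also have "(\<forall>v\<in>Y. a v = b v) = (a = b)" using a b by (auto simp: confX_def fun_eq_iff)
  finally show "mm (confX d Y) (adj (UXd Us Y)) (UXd Us Y) a b = (if a = b then 1 else 0)" .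
qed

lemma gramA:
  "(\<Sum>e\<in>T. (\<Sum>i\<in>S. U a i * Z e i) * cnj (\<Sum>j\<in>S. U b j * Z e j))
   = (\<Sum>j\<in>S. (\<Sum>i\<in>S. U a i * (\<Sum>e\<in>T. Z e i * cnj (Z e j))) * cnj (U b j))"
proof -
  let ?F = "\<lambda>e i j. U a i * Z e i * (cnj (U b j) * cnj (Z e j))"
  have "(\<Sum>e\<in>T. (\<Sum>i\<in>S. U a i * Z e i) * cnj (\<Sum>j\<in>S. U b j * Z e j)) = (\<Sum>e\<in>T. \<Sum>i\<in>S. \<Sum>j\<in>S. ?F e i j)"
    by (simp only: cnj_sum complex_cnj_mult sum_product)
  also have "\<dots> = (\<Sum>i\<in>S. \<Sum>e\<in>T. \<Sum>j\<in>S. ?F e i j)" by (rule sum.swap)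
  also have "\<dots> = (\<Sum>i\<in>S. \<Sum>j\<in>S. \<Sum>e\<in>T. ?F e i j)" by (rule sum.cong[OF refl]) (rule sum.swap)
  also have "\<dots> = (\<Sum>j\<in>S. \<Sum>i\<in>S. \<Sum>e\<in>T. ?F e i j)" by (rule sum.swap)
  also have "\<dots> = (\<Sum>j\<in>S. (\<Sum>i\<in>S. U a i * (\<Sum>e\<in>T. Z e i * cnj (Z e j))) * cnj (U b j))"
    by (intro sum.cong refl) (simp add: sum_distrib_left sum_distrib_right ac_simps)
  finally show ?thesis .
qed

lemma gramB:
  assumes fin: "finite T"
    and U1: "\<forall>e'\<in>T. \<forall>e''\<in>T. (\<Sum>e\<in>T. cnj (V e e') * V e e'') = (if e' = e'' then 1 else 0)"
  shows "(\<Sum>e\<in>T. (\<Sum>e'\<in>T. V e e' * G i e') * cnj (\<Sum>e''\<in>T. V e e'' * G j e''))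
       = (\<Sum>e'\<in>T. G i e' * cnj (G j e'))"
proof -
  let ?F = "\<lambda>e e' e''. V e e' * G i e' * (cnj (V e e'') * cnj (G j e''))"
  have "(\<Sum>e\<in>T. (\<Sum>e'\<in>T. V e e' * G i e') * cnj (\<Sum>e''\<in>T. V e e'' * G j e''))
      = (\<Sum>e\<in>T. \<Sum>e'\<in>T. \<Sum>e''\<in>T. ?F e e' e'')"
    by (simp only: cnj_sum complex_cnj_mult sum_product)
  also have "\<dots> = (\<Sum>e'\<in>T. \<Sum>e\<in>T. \<Sum>e''\<in>T. ?F e e' e'')" by (rule sum.swap)
  also have "\<dots> = (\<Sum>e'\<in>T. \<Sum>e''\<in>T. \<Sum>e\<in>T. ?F e e' e'')" by (rule sum.cong[OF refl]) (rule sum.swap)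
  also have "\<dots> = (\<Sum>e'\<in>T. \<Sum>e''\<in>T. G i e' * cnj (G j e'') * cnj (\<Sum>e\<in>T. cnj (V e e') * V e e''))"
  proof (intro sum.cong refl)
    fix e' e''
    have "G i e' * cnj (G j e'') * cnj (\<Sum>e\<in>T. cnj (V e e') * V e e'')
        = (\<Sum>e\<in>T. G i e' * cnj (G j e'') * (V e e' * cnj (V e e'')))"
      by (simp only: cnj_sum complex_cnj_mult complex_cnj_cnj sum_distrib_left)
    also have "\<dots> = (\<Sum>e\<in>T. ?F e e' e'')" by (intro sum.cong refl) (simp only: ac_simps)
    finally show "(\<Sum>e\<in>T. ?F e e' e'') = G i e' * cnj (G j e'') * cnj (\<Sum>e\<in>T. cnj (V e e') * V e e'')" by simp
  qed
  also have "\<dots> = (\<Sum>e'\<in>T. \<Sum>e''\<in>T. if e' = e'' then G i e' * cnj (G j e'') else 0)"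
    using U1 by (intro sum.cong refl) simp
  also have "\<dots> = (\<Sum>e'\<in>T. G i e' * cnj (G j e'))"
    using fin by (intro sum.cong refl) (simp add: sum.delta)
  finally show ?thesis .
qed




lemma rdm_onsite:
  fixes d :: "'v::finite \<Rightarrow> nat"
  assumes U: "\<forall>v. unitary_site (d v) (Us v)" and a: "a \<in> confX d X" and b: "b \<in> confX d X"
  shows "rdm d X (onsite d Us \<phi>) a b
    = mm (confX d X) (mm (confX d X) (UXd Us X) (rdm d X \<phi>)) (adj (UXd Us X)) a b"
proof -
  define Z where "Z e i = (\<Sum>e'\<in>confX d (-X). UXd Us (-X) e e' * \<phi> (merge X i e'))" for e i
  have UY1: "\<forall>e'\<in>confX d (-X). \<forall>e''\<in>confX d (-X).
      (\<Sum>e\<in>confX d (-X). cnj (UXd Us (-X) e e') * UXd Us (-X) e e'') = (if e' = e'' then 1 else 0)"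
    using unitary_UX[OF U, of "-X"] by (simp add: mm_def adj_def)
  have "rdm d X (onsite d Us \<phi>) a b
      = (\<Sum>e\<in>confX d (-X). (\<Sum>i\<in>confX d X. UXd Us X a i * Z e i) * cnj (\<Sum>j\<in>confX d X. UXd Us X b j * Z e j))"
    unfolding rdm_def by (rule sum.cong[OF refl]) (simp add: onsite_merge a b mv_def Z_def)
  also have "\<dots> = (\<Sum>j\<in>confX d X. (\<Sum>i\<in>confX d X. UXd Us X a i * (\<Sum>e\<in>confX d (-X). Z e i * cnj (Z e j))) * cnj (UXd Us X b j))"
    by (rule gramA[where U="UXd Us X" and Z=Z])
  also have "\<dots> = (\<Sum>j\<in>confX d X. (\<Sum>i\<in>confX d X. UXd Us X a i * rdm d X \<phi> i j) * cnj (UXd Us X b j))"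
    unfolding Z_def rdm_def
    by (simp only: gramB[OF finite_confX UY1, where G="\<lambda>i e'. \<phi> (merge X i e')"])
  also have "\<dots> = mm (confX d X) (mm (confX d X) (UXd Us X) (rdm d X \<phi>)) (adj (UXd Us X)) a b"
    by (simp add: mm_def adj_def)
  finally show ?thesis .
qed

lemma onsite_imf:
  fixes d :: "'v::finite \<Rightarrow> nat"
  assumes U: "\<forall>v. unitary_site (d v) (Us v)"
  shows "onsite d Us (imf d X t \<phi>) = imf d X t (onsite d Us \<phi>)"
proof
  fix c
  let ?S = "confX d X" and ?T = "confX d (-X)" and ?UX = "UXd Us X" and ?UY = "UXd Us (-X)"
  let ?fe = "\<lambda>l. l powr (\<i> * complex_of_real t)"
  let ?\<psi> = "onsite d Us \<phi>"
  show "onsite d Us (imf d X t \<phi>) c = imf d X t ?\<psi> c"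
  proof (cases "c \<in> conf d")
    case False then show ?thesis by (simp add: onsite_def imf_def)
  next
    case True
    define a where "a = restr X c"
    define e where "e = restr (-X) c"
    have a: "a \<in> ?S" unfolding a_def by (rule restr_in1[OF True])
    have e: "e \<in> ?T" unfolding e_def by (rule restr_in2[OF True])
    have c: "c = merge X a e" unfolding a_def e_def by (simp add: merge_restr)
    define \<rho> where "\<rho> = rho_it d X t \<phi>"
    define \<rho>' where "\<rho>' = rho_it d X t ?\<psi>"
    define z where "z = (\<lambda>a''. \<Sum>e'\<in>?T. ?UY e e' * \<phi> (merge X a'' e'))"
    have finS: "finite ?S" by (rule finite_confX)
    have U1: "\<forall>a\<in>?S. \<forall>b\<in>?S. mm ?S (adj ?UX) ?UX a b = (if a = b then 1 else 0)"
      by (rule unitary_UX[OF U])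
    have U2: "\<forall>a\<in>?S. \<forall>b\<in>?S. mm ?S ?UX (adj ?UX) a b = (if a = b then 1 else 0)"
      by (rule co_unitary[OF finS U1])
    have PmR: "Pm ?S ?fe (rdm d X \<phi>) \<rho>"
      unfolding \<rho>_def rho_it_def by (rule mat_fun_char[OF finS herm_rdm])
    have K': "\<forall>a\<in>?S. \<forall>b\<in>?S. rdm d X ?\<psi> a b = mm ?S (mm ?S ?UX (rdm d X \<phi>)) (adj ?UX) a b"
      using rdm_onsite[OF U] by blast
    have "Pm ?S ?fe (rdm d X ?\<psi>) (\<lambda>a b. if a \<in> ?S \<and> b \<in> ?S then mm ?S (mm ?S ?UX \<rho>) (adj ?UX) a b else 0)"
      by (rule Pm_transfer[OF finS U1 U2 K' PmR])
    then have rho': "\<rho>' = (\<lambda>a b. if a \<in> ?S \<and> b \<in> ?S then mm ?S (mm ?S ?UX \<rho>) (adj ?UX) a b else 0)"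
      unfolding \<rho>'_def rho_it_def by (rule mat_fun_eq[OF finS herm_rdm])
    have L: "onsite d Us (imf d X t \<phi>) c = mv ?S ?UX (mv ?S \<rho> z) a"
    proof -
      have "onsite d Us (imf d X t \<phi>) c
          = mv ?S ?UX (\<lambda>a'. \<Sum>e'\<in>?T. ?UY e e' * imf d X t \<phi> (merge X a' e')) a"
        by (simp only: c onsite_merge[OF a e])
      also have "\<dots> = mv ?S ?UX (mv ?S \<rho> z) a"
      proof (rule mv_cong)
        fix a' assume a': "a' \<in> ?S"
        have "(\<Sum>e'\<in>?T. ?UY e e' * imf d X t \<phi> (merge X a' e'))
            = (\<Sum>e'\<in>?T. \<Sum>a''\<in>?S. \<rho> a' a'' * (?UY e e' * \<phi> (merge X a'' e')))"
          by (rule sum.cong[OF refl]) (simp add: imf_merge[OF a'] mv_def \<rho>_def sum_distrib_left ac_simps)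
        also have "\<dots> = (\<Sum>a''\<in>?S. \<Sum>e'\<in>?T. \<rho> a' a'' * (?UY e e' * \<phi> (merge X a'' e')))"
          by (rule sum.swap)
        also have "\<dots> = mv ?S \<rho> z a'"
          by (simp add: mv_def z_def sum_distrib_left)
        finally show "(\<Sum>e'\<in>?T. ?UY e e' * imf d X t \<phi> (merge X a' e')) = mv ?S \<rho> z a'" .
      qed
      finally show ?thesis .
    qed
    have R: "imf d X t ?\<psi> c = mv ?S ?UX (mv ?S \<rho> z) a"
    proof -
      have "imf d X t ?\<psi> c = mv ?S \<rho>' (\<lambda>a'. ?\<psi> (merge X a' e)) a"
        by (simp only: c imf_merge[OF a e] \<rho>'_def)
      also have "\<dots> = mv ?S \<rho>' (mv ?S ?UX z) a"
        by (rule mv_cong) (simp only: onsite_merge[OF _ e] z_def)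
      also have "\<dots> = mv ?S (mm ?S (mm ?S ?UX \<rho>) (adj ?UX)) (mv ?S ?UX z) a"
        by (rule mv_cong_mat) (simp add: rho' a)
      also have "\<dots> = mv ?S ?UX (mv ?S \<rho> (mv ?S (adj ?UX) (mv ?S ?UX z))) a"
        by (simp only: mv_mm)
      also have "\<dots> = mv ?S ?UX (mv ?S \<rho> z) a"
      proof (rule mv_cong, rule mv_cong)
        fix b assume b: "b \<in> ?S"
        have "mv ?S (adj ?UX) (mv ?S ?UX z) b = mv ?S (mm ?S (adj ?UX) ?UX) z b" by (simp only: mv_mm)
        also have "\<dots> = z b" by (rule mv_id[OF finS U1 b])
        finally show "mv ?S (adj ?UX) (mv ?S ?UX z) b = z b" .
      qed
      finally show ?thesis .
    qed
    from L R show ?thesis by simp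
  qed
qed

lemma onsite_seq:
  fixes d :: "'v::finite \<Rightarrow> nat"
  assumes U: "\<forall>v. unitary_site (d v) (Us v)"
  shows "onsite d Us (seqflow d A ts j k \<phi>) = seqflow d A ts j k (onsite d Us \<phi>)"
proof (induction k)
  case 0 show ?case by (simp only: seqflow.simps)
next
  case (Suc k)
  have "onsite d Us (seqflow d A ts j (Suc k) \<phi>)
      = onsite d Us (imf d (A (j + k)) (ts (j + k)) (seqflow d A ts j k \<phi>))"
    by (simp only: seqflow.simps)
  also have "\<dots> = imf d (A (j + k)) (ts (j + k)) (onsite d Us (seqflow d A ts j k \<phi>))"
    by (rule onsite_imf[OF U])
  also have "\<dots> = seqflow d A ts j (Suc k) (onsite d Us \<phi>)"
    by (simp only: Suc.IH seqflow.simps)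
  finally show ?case .
qed

lemma seq_split: "seqflow d A ts j (m + k) \<phi> = seqflow d A ts (j + m) k (seqflow d A ts j m \<phi>)"
  by (induction k) (simp_all add: add.assoc)

theorem lemma5:
  fixes d :: "'v::finite \<Rightarrow> nat"
    and Us :: "'v \<Rightarrow> nat \<Rightarrow> nat \<Rightarrow> complex"
    and \<psi> :: "('v \<Rightarrow> nat) \<Rightarrow> complex"
    and A :: "nat \<Rightarrow> 'v set" and ts :: "nat \<Rightarrow> real" and n i :: nat
  assumes "\<forall>c. c \<notin> conf d \<longrightarrow> \<psi> c = 0"
    and "\<forall>v. unitary_site (d v) (Us v)"
    and "i \<in> {1..n+1}"
  shows "onsite d Us (seqflow d A ts 1 n \<psi>)
       = seqflow d A ts i (n + 1 - i) (onsite d Us (seqflow d A ts 1 (i - 1) \<psi>))"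
proof -
  define m where "m = i - 1"
  define k where "k = n + 1 - i"
  have im: "i = 1 + m" and nmk: "n = m + k" using assms(3) by (auto simp: m_def k_def)
  have "onsite d Us (seqflow d A ts 1 n \<psi>) = onsite d Us (seqflow d A ts (1 + m) k (seqflow d A ts 1 m \<psi>))"
    by (simp only: nmk seq_split)
  also have "\<dots> = seqflow d A ts (1 + m) k (onsite d Us (seqflow d A ts 1 m \<psi>))"
    by (rule onsite_seq[OF assms(2)])
  finally have X: "onsite d Us (seqflow d A ts 1 n \<psi>) = seqflow d A ts (1 + m) k (onsite d Us (seqflow d A ts 1 m \<psi>))" .
  have e1: "1 + m = i" using im by simp
  show ?thesis using X by (simp only: e1 k_def[symmetric] m_def[symmetric])
qed


end
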